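(* Let $\Phi(x,y)$ be a standard symmetric polynomial of partial degree $d$ and let $H$ be a finite, connected, $d$-regular graph on $[n]$ that is strongly $\Phi$-polynomial. If $C$ is a singular component of $G(\Phi)$ without defective vertices, then there exists an improper point $(u_1,\dots,u_n)\in U(H,\Phi)$ such that $C=\langle u_1,\dots,u_n\rangle$, and the map $i\mapsto u_i$ is a graph morphism from $H$ onto $C$.
   Context: For symmetric $\Phi(x,y)=\sum_{i=0}^d a_i(x)y^i\in\mathbb{C}[x,y]$ of partial degree $d$: $G(\Phi)$ has vertex set $\mathbb{C}$, neighbours of $u$ being the roots of $\Phi(u,y)$ (edges = points of $\mathbb{V}(\Phi)$). A vertex $u$ is defective if $a_d(u)=0$; a component is singular if it contains a loop ($\Phi(u,u)=0$), a multiple edge (multiple root of $\Phi(u,y)$) or a defective vertex. $\Phi$ is standard if it is squarefree, $\Phi(x,x)\not\equiv0$, and has no nonconstant factor depending only on $x$ (or only on $y$); $G(\Phi)^*$ is $G(\Phi)$ with its finitely many singular components removed. $H$ is strongly $\Phi$-polynomial if it is isomorphic to every component of $G(\Phi)^*$. $\langle u_1,\dots,u_n\rangle$ is the subgraph of $G(\Phi)$ induced by $u_1,\dots,u_n$. With $E$ the edge set of $H$: $W(H,\Phi)=\mathbb{V}(\{\Phi(x_i,x_j):ij\in E\})\subseteq\mathbb{C}^n$, $Z(H,\Phi)=W(H,\Phi)\cap\bigcup_{i>j}\mathbb{V}(x_i-x_j)$, $U(H,\Phi)=\overline{W(H,\Phi)\setminus Z(H,\Phi)}$; a point is improper if two of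 its coordinates coincide. *)

theory Defs
  imports "HOL-Analysis.Analysis" "HOL-Computational_Algebra.Computational_Algebra"
begin

text \<open>A bivariate polynomial Phi(x,y) = sum_i a_i(x) y^i is represented as an element of
  complex poly poly: a polynomial in y whose coefficients a_i are polynomials in x.\<close>

type_synonym bipoly = "complex poly poly"

definition Phi_at :: "bipoly \<Rightarrow> complex \<Rightarrow> complex poly" where
  "Phi_at Phi u = map_poly (\<lambda>a. poly a u) Phi"

definition bieval :: "bipoly \<Rightarrow> complex \<Rightarrow> complex \<Rightarrow> complex" where
  "bieval Phi u v = poly (Phi_at Phi u) v"

definition symmetric_bipoly :: "bipoly \<Rightarrow> bool" where
  "symmetric_bipoly Phi \<longleftrightarrow> (\<forall>u v. bieval Phi u v = bieval Phi v u)"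

text \<open>partial degree (degree in y; by symmetry equal to the degree in x)\<close>
definition partial_degree :: "bipoly \<Rightarrow> nat" where
  "partial_degree Phi = degree Phi"

definition standard :: "bipoly \<Rightarrow> bool" where
  "standard Phi \<longleftrightarrow> squarefree Phi \<and> (\<exists>u. bieval Phi u u \<noteq> 0)
     \<and> (\<forall>p::complex poly. degree p > 0 \<longrightarrow> \<not> [:p:] dvd Phi)
     \<and> (\<forall>p::complex poly. degree p > 0 \<longrightarrow> \<not> map_poly (\<lambda>c. [:c:]) p dvd Phi)"

definition G_adj :: "bipoly \<Rightarrow> complex \<Rightarrow> complex \<Rightarrow> bool" where
  "G_adj Phi u v \<longleftrightarrow> bieval Phi u v = 0"

definition component :: "bipoly \<Rightarrow> complex set \<Rightarrow> bool" where
  "component Phi C \<longleftrightarrow> (\<exists>u. C = {v. (G_adj Phi)\<^sup>*\<^sup>* u v})"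

definition defective :: "bipoly \<Rightarrow> complex \<Rightarrow> bool" where
  "defective Phi u \<longleftrightarrow> poly (coeff Phi (partial_degree Phi)) u = 0"

definition singular_component :: "bipoly \<Rightarrow> complex set \<Rightarrow> bool" where
  "singular_component Phi C \<longleftrightarrow> component Phi C \<and>
     ((\<exists>u\<in>C. G_adj Phi u u)
      \<or> (\<exists>u\<in>C. \<exists>v. [:-v, 1:] ^ 2 dvd Phi_at Phi u)
      \<or> (\<exists>u\<in>C. defective Phi u))"

text \<open>Finite graphs H with vertex set a finite type 'n (standing for [n]), given by a
  symmetric irreflexive edge relation E.\<close>
definition simple_graph :: "('n::finite \<Rightarrow> 'n \<Rightarrow> bool) \<Rightarrow> bool" where
  "simple_graph E \<longleftrightarrow> (\<forall>i j. E i j \<longrightarrow> E j i) \<and> (\<forall>i. \<not> E i i)"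

definition connected_graph :: "('n::finite \<Rightarrow> 'n \<Rightarrow> bool) \<Rightarrow> bool" where
  "connected_graph E \<longleftrightarrow> (\<forall>i j. E\<^sup>*\<^sup>* i j)"

definition regular_graph :: "('n::finite \<Rightarrow> 'n \<Rightarrow> bool) \<Rightarrow> nat \<Rightarrow> bool" where
  "regular_graph E d \<longleftrightarrow> (\<forall>i. card {j. E i j} = d)"

text \<open>H is isomorphic to every component of G(Phi)^* (= non-singular components).\<close>
definition strongly_poly :: "('n::finite \<Rightarrow> 'n \<Rightarrow> bool) \<Rightarrow> bipoly \<Rightarrow> bool" where
  "strongly_poly E Phi \<longleftrightarrow> (\<forall>C. component Phi C \<and> \<not> singular_component Phi C \<longrightarrow>
     (\<exists>f. bij_betw f UNIV C \<and> (\<forall>i j. E i j \<longleftrightarrow> G_adj Phi (f i) (f j))))"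

inductive_set polyfun :: "(complex ^ 'n \<Rightarrow> complex) set" where
  pf_const: "(\<lambda>x. c) \<in> polyfun"
| pf_coord: "(\<lambda>x. x $ i) \<in> polyfun"
| pf_add: "p \<in> polyfun \<Longrightarrow> q \<in> polyfun \<Longrightarrow> (\<lambda>x. p x + q x) \<in> polyfun"
| pf_mult: "p \<in> polyfun \<Longrightarrow> q \<in> polyfun \<Longrightarrow> (\<lambda>x. p x * q x) \<in> polyfun"

definition zariski_closure :: "(complex ^ 'n) set \<Rightarrow> (complex ^ 'n) set" where
  "zariski_closure S = {x. \<forall>p\<in>polyfun. (\<forall>s\<in>S. p s = 0) \<longrightarrow> p x = 0}"

definition improper :: "complex ^ 'n \<Rightarrow> bool" where
  "improper x \<longleftrightarrow> (\<exists>i j. i \<noteq> j \<and> x $ i = x $ j)"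

definition W_set :: "('n::finite \<Rightarrow> 'n \<Rightarrow> bool) \<Rightarrow> bipoly \<Rightarrow> (complex ^ 'n) set" where
  "W_set E Phi = {x. \<forall>i j. E i j \<longrightarrow> bieval Phi (x $ i) (x $ j) = 0}"

definition Z_set :: "('n::finite \<Rightarrow> 'n \<Rightarrow> bool) \<Rightarrow> bipoly \<Rightarrow> (complex ^ 'n) set" where
  "Z_set E Phi = W_set E Phi \<inter> {x. improper x}"

definition U_set :: "('n::finite \<Rightarrow> 'n \<Rightarrow> bool) \<Rightarrow> bipoly \<Rightarrow> (complex ^ 'n) set" where
  "U_set E Phi = zariski_closure (W_set E Phi - Z_set E Phi)"

definition induced_vertices :: "complex ^ 'n \<Rightarrow> complex set" where
  "induced_vertices x = range (\<lambda>i. x $ i)"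

end

theory Submission
  imports Defs "HOL-Computational_Algebra.Field_as_Ring"
begin

no_notation fps_nth (infixl \<open>$\<close> 75)


lemma Phi_at_pCons: "Phi_at (pCons a p) u = pCons (poly a u) (Phi_at p u)"
  unfolding Phi_at_def by (simp add: map_poly_pCons)

lemma Phi_at_0[simp]: "Phi_at 0 u = 0"
  unfolding Phi_at_def by simp

lemma bieval_alt: "bieval P u v = poly (poly P [:v:]) u"
  unfolding bieval_def
  by (induct P rule: pCons_induct) (auto simp: Phi_at_pCons)

lemma bieval_mult: "bieval (P * Q) u v = bieval P u v * bieval Q u v"
  by (simp add: bieval_alt)
lemma bieval_add: "bieval (P + Q) u v = bieval P u v + bieval Q u v"
  by (simp add: bieval_alt)
lemma bieval_const: "bieval [:c:] u v = poly c u"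
  by (simp add: bieval_alt)

lemma bieval_sum: "bieval P u v = (\<Sum>m\<le>degree P. poly (coeff P m) u * v^m)"
  by (simp add: bieval_alt poly_altdef[of P] poly_sum poly_power)

lemma bieval_tendsto:
  assumes "X \<longlonglongrightarrow> a" "Y \<longlonglongrightarrow> b"
  shows "(\<lambda>k. bieval P (X k) (Y k)) \<longlonglongrightarrow> bieval P a b"
  unfolding bieval_sum
  by (intro tendsto_intros assms isCont_tendsto_compose[OF _ assms(1)]) auto

lemma coeff_Phi_at: "coeff (Phi_at P u) m = poly (coeff P m) u"
  unfolding Phi_at_def by (simp add: coeff_map_poly)

lemma Phi_at_pderiv: "Phi_at (pderiv P) u = pderiv (Phi_at P u)"
  by (rule poly_eqI) (simp add: coeff_Phi_at coeff_pderiv)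

lemma degree_Phi_at_le: "degree (Phi_at P u) \<le> degree P"
  by (rule degree_le) (simp add: coeff_Phi_at coeff_eq_0)

lemma degree_Phi_at:
  assumes "poly (coeff P (degree P)) u \<noteq> 0"
  shows "degree (Phi_at P u) = degree P"
  using assms degree_Phi_at_le[of P u]
  by (metis coeff_Phi_at le_antisym le_degree)

lemma double_root_pderiv:
  fixes p :: "complex poly"
  assumes "[:-v,1:]^2 dvd p"
  shows "poly (pderiv p) v = 0"
proof -
  from assms obtain s where p: "p = [:-v,1:]^2 * s" by (elim dvdE)
  have "pderiv p = pderiv [:-v,1:] * ([:-v,1:] * s) + [:-v,1:] * pderiv ([:-v,1:] * s)"
    unfolding p by (simp only: power2_eq_square mult.assoc pderiv_mult) (simp add: algebra_simps)
  then show ?thesis by simp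
qed

lemma to_fract_of_nat: "to_fract (of_nat n) = of_nat n"
  by (induct n) auto

lemma fract_pderiv: "pderiv (map_poly to_fract (P::'a::idom poly)) = map_poly to_fract (pderiv P)"
  by (rule poly_eqI) (simp add: coeff_pderiv coeff_map_poly to_fract_of_nat[symmetric] del: of_nat_Suc)


instantiation fract :: (idom)
  "{unique_euclidean_ring, normalization_euclidean_semiring, normalization_semidom_multiplicative}"
begin

definition [simp]: "normalize_fract (x::'a fract) = (if x = 0 then 0 else 1 :: 'a fract)"
definition [simp]: "unit_factor_fract (x::'a fract) = x"
definition [simp]: "modulo_fract (x::'a fract) (y::'a fract) = (if y = 0 then x else 0)"
definition [simp]: "euclidean_size_fract (x::'a fract) = (if x = 0 then 0 else (1::nat))"
definition [simp]: "division_segment (x :: 'a fract) = 1"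

instance
  by standard
    (simp_all add: dvd_field_iff field_split_simps split: if_splits)

end

instantiation fract :: (idom) euclidean_ring_gcd
begin

definition gcd_fract :: "'a fract \<Rightarrow> 'a fract \<Rightarrow> 'a fract" where
  "gcd_fract = Euclidean_Algorithm.gcd"
definition lcm_fract :: "'a fract \<Rightarrow> 'a fract \<Rightarrow> 'a fract" where
  "lcm_fract = Euclidean_Algorithm.lcm"
definition Gcd_fract :: "'a fract set \<Rightarrow> 'a fract" where
 "Gcd_fract = Euclidean_Algorithm.Gcd"
definition Lcm_fract :: "'a fract set \<Rightarrow> 'a fract" where
 "Lcm_fract = Euclidean_Algorithm.Lcm"

instance by standard (simp_all add: gcd_fract_def lcm_fract_def Gcd_fract_def Lcm_fract_def)

end

instance fract :: (idom) field_gcd ..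

lemma fract_of_nat_nz: "(of_nat n :: complex poly fract) \<noteq> 0 \<longleftrightarrow> n \<noteq> 0"
  by (simp add: to_fract_of_nat[symmetric])

lemma pderiv_nz_fract:
  fixes q :: "complex poly fract poly"
  assumes "degree q > 0"
  shows "pderiv q \<noteq> 0"
proof
  assume "pderiv q = 0"
  then have "coeff (pderiv q) (degree q - 1) = 0" by simp
  then have "of_nat (degree q) * lead_coeff q = 0"
    using assms by (simp add: coeff_pderiv)
  then show False using assms fract_of_nat_nz[of "degree q"] by auto
qed

lemma coprime_fract_pderiv:
  fixes Phi :: bipoly
  assumes sf: "squarefree Phi" and nz: "Phi \<noteq> 0"
  shows "coprime (map_poly to_fract Phi) (pderiv (map_poly to_fract Phi))"
proof (rule ccontr)
  define P where "P = map_poly to_fract Phi"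
  assume nc: "\<not> coprime (map_poly to_fract Phi) (pderiv (map_poly to_fract Phi))"
  then have nc: "\<not> coprime P (pderiv P)" by (simp add: P_def)
  have Pnz: "P \<noteq> 0" using nz by (simp add: P_def)
  let ?g = "gcd P (pderiv P)"
  have "?g \<noteq> 0" using Pnz by simp
  moreover have "\<not> is_unit ?g" using nc by (simp add: coprime_iff_gcd_eq_1 is_unit_gcd)
  ultimately obtain q where qg: "q dvd ?g" and qp: "prime q" using prime_divisor_exists by blast
  have qP: "q dvd P" and qP': "q dvd pderiv P" using qg dvd_trans by auto
  have qnu: "\<not> is_unit q" using qp not_prime_unit by blast
  have qnz: "q \<noteq> 0" using qp by auto
  have dq: "degree q > 0"
    using qnu qnz by (metis gr0I is_unit_iff_degree)
  from qP obtain h where h: "P = q * h" by (elim dvdE)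
  have "pderiv P = pderiv q * h + q * pderiv h" unfolding h by (simp add: pderiv_mult algebra_simps)
  with qP' have "q dvd pderiv q * h" by (metis dvd_add_times_triv_right_iff mult.commute)
  with qp have "q dvd pderiv q \<or> q dvd h" by (simp add: prime_dvd_mult_iff)
  then show False
  proof
    assume "q dvd pderiv q"
    moreover have "pderiv q \<noteq> 0" using pderiv_nz_fract[OF dq] .
    ultimately have "degree q \<le> degree (pderiv q)" by (rule dvd_imp_degree_le)
    moreover have "degree (pderiv q) \<le> degree q - 1"
      by (rule degree_le) (auto simp: coeff_pderiv coeff_eq_0)
    then have "degree (pderiv q) < degree q" using dq by simp
    ultimately show False by simp
  next
    assume "q dvd h"
    then have qq: "q * q dvd P" unfolding h by simp
    obtain c q0 where q0: "q = smult c (map_poly to_fract q0)" "content q0 = 1"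
      by (rule content_decompose_fract)
    have cnz: "c \<noteq> 0" using q0 qnz by auto
    have "q * q = smult (c*c) (map_poly to_fract (q0 * q0))" using q0 by simp
    with qq have "smult (c*c) (map_poly to_fract (q0 * q0)) dvd map_poly to_fract Phi"
      by (simp add: P_def)
    then have "map_poly to_fract (q0 * q0) dvd map_poly to_fract Phi"
      using cnz by (simp add: smult_dvd_iff)
    then have "q0 * q0 dvd Phi"
      by (rule fract_poly_dvdD) (simp add: content_mult q0(2))
    then have "is_unit q0" using sf by (intro squarefreeD[of Phi]) (simp_all add: power2_eq_square)
    then have "is_unit (map_poly to_fract q0)" by (rule fract_poly_is_unit)
    then have "is_unit q" using q0 cnz by (simp add: is_unit_smult_iff dvd_field_iff)
    with qnu show False by simp
  qed
qed


lemma bieval_smult: "bieval (smult c X) u v = poly c u * bieval X u v"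
  by (simp add: bieval_alt)

lemma double_root_poly:
  fixes Phi :: bipoly
  assumes sf: "squarefree Phi" and nz: "Phi \<noteq> 0"
  shows "\<exists>r. r \<noteq> 0 \<and> (\<forall>u v. [:-v,1:]^2 dvd Phi_at Phi u \<longrightarrow> poly r u = 0)"
proof -
  define P where "P = map_poly to_fract Phi"
  have "coprime P (pderiv P)" unfolding P_def by (rule coprime_fract_pderiv[OF sf nz])
  then have g1: "gcd P (pderiv P) = 1" by (rule coprime_imp_gcd_eq_1)
  obtain A B where AB: "A * P + B * pderiv P = 1"
    using bezout_coefficients_fst_snd[of P "pderiv P"] g1 by metis
  obtain \<alpha> A0 where A: "A = smult \<alpha> (map_poly to_fract A0)" by (rule content_decompose_fract)
  obtain \<beta> B0 where B: "B = smult \<beta> (map_poly to_fract B0)" by (rule content_decompose_fract)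
  obtain a1 a2 where al: "\<alpha> = Fract a1 a2" "a2 \<noteq> 0" by (rule Fract_cases)
  obtain b1 b2 where be: "\<beta> = Fract b1 b2" "b2 \<noteq> 0" by (rule Fract_cases)
  have "map_poly to_fract (smult (a1*b2) A0 * Phi + smult (b1*a2) B0 * pderiv Phi)
        = smult (to_fract a2 * to_fract b2) (A * P + B * pderiv P)"
  proof -
    have s1: "to_fract a2 * to_fract b2 * (to_fract a1 / to_fract a2) = to_fract a1 * to_fract b2"
      using al(2) by simp
    have s2: "to_fract a2 * to_fract b2 * (to_fract b1 / to_fract b2) = to_fract a2 * to_fract b1"
      using be(2) by simp
    show ?thesis
      unfolding A B al be P_def using al(2) be(2)
      by (simp add: fract_pderiv Fract_conv_to_fract smult_add_right s1 s2 mult.commute)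
  qed
  also have "\<dots> = map_poly to_fract [:a2 * b2:]" by (simp add: AB map_poly_pCons)
  finally have eq: "smult (a1*b2) A0 * Phi + smult (b1*a2) B0 * pderiv Phi = [:a2 * b2:]"
    by (simp only: fract_poly_eq_iff)
  show ?thesis
  proof (intro exI conjI allI impI)
    show "a2 * b2 \<noteq> 0" using al(2) be(2) by simp
    fix u v assume dr: "[:-v,1:]^2 dvd Phi_at Phi u"
    have "bieval Phi u v = 0"
    proof -
      from dr obtain s where "Phi_at Phi u = [:-v,1:]^2 * s" by (elim dvdE)
      then show ?thesis by (simp add: bieval_def)
    qed
    moreover have "bieval (pderiv Phi) u v = 0"
      using double_root_pderiv[OF dr] by (simp add: bieval_def Phi_at_pderiv)
    ultimately have "bieval [:a2 * b2:] u v = 0"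
      unfolding eq[symmetric] by (simp add: bieval_add bieval_mult bieval_smult)
    then show "poly (a2 * b2) u = 0" by (simp add: bieval_const)
  qed
qed


lemma roots_prod_dvd:
  fixes q :: "complex poly"
  assumes "finite R" "\<forall>r\<in>R. poly q r = 0"
  shows "(\<Prod>r\<in>R. [:-r,1:]) dvd q"
  using assms
proof (induct R arbitrary: q rule: finite_induct)
  case empty then show ?case by simp
next
  case (insert r R)
  have "poly q r = 0" using insert by simp
  then obtain q' where q': "q = [:-r,1:] * q'" by (metis dvdE poly_eq_0_iff_dvd)
  have "\<forall>s\<in>R. poly q' s = 0"
  proof
    fix s assume "s \<in> R"
    then have "s \<noteq> r" "poly q s = 0" using insert by auto
    then show "poly q' s = 0" using q' by simp
  qed
  then have "(\<Prod>r\<in>R. [:-r,1:]) dvd q'" using insert by blast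
  then have "[:-r,1:] * (\<Prod>r\<in>R. [:-r,1:]) dvd q" unfolding q' by (rule mult_dvd_mono[OF dvd_refl])
  then show ?case using insert(1,2) by (subst prod.insert) auto
qed

lemma roots_prod_eq:
  fixes q :: "complex poly"
  assumes "finite R" "\<forall>r\<in>R. poly q r = 0" "q \<noteq> 0" "degree q = card R"
  shows "poly q y = lead_coeff q * (\<Prod>r\<in>R. (y - r))"
proof -
  let ?L = "\<Prod>r\<in>R. [:-r,1:]"
  obtain s where s: "q = ?L * s" using roots_prod_dvd[OF assms(1,2)] by (elim dvdE)
  have Lnz: "?L \<noteq> 0" using assms(1) by (simp add: prod_zero_iff)
  have snz: "s \<noteq> 0" using s assms(3) by auto
  have dL: "degree ?L = card R" using assms(1) by (simp add: degree_prod_eq_sum_degree)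
  have "degree q = degree ?L + degree s" using s Lnz snz by (simp add: degree_mult_eq)
  then have "degree s = 0" using dL assms(4) by simp
  then obtain c where c: "s = [:c:]" by (metis degree_eq_zeroE)
  have mon: "lead_coeff ?L = 1" by (simp add: lead_coeff_prod)
  have "lead_coeff q = c" using s c mon by (simp add: lead_coeff_mult)
  then show ?thesis using s c by (simp add: poly_prod)
qed

lemma rtranclp_sym:
  assumes sym: "\<And>x y. R x y \<Longrightarrow> R y x" and "R\<^sup>*\<^sup>* a b"
  shows "R\<^sup>*\<^sup>* b a"
  using assms(2)
proof (induct rule: rtranclp_induct)
  case base then show ?case by simp
next
  case (step y z)
  then show ?case by (meson converse_rtranclp_into_rtranclp sym)
qed

lemma reach_countable:
  assumes fin: "\<And>x. finite {y. R x y}"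
  shows "countable {y. R\<^sup>*\<^sup>* x y}"
proof -
  have f: "finite {y. (R ^^ n) x y}" for n
  proof (induct n)
    case 0 then show ?case by simp
  next
    case (Suc n)
    have "{y. (R ^^ Suc n) x y} = (\<Union>w\<in>{y. (R ^^ n) x y}. {y. R w y})" by auto
    then show ?case using Suc fin by simp
  qed
  have "{y. R\<^sup>*\<^sup>* x y} = (\<Union>n. {y. (R ^^ n) x y})" by (auto simp: rtranclp_power)
  then show ?thesis using f by (simp add: countable_finite)
qed


lemma root_bound:
  fixes q :: "complex poly"
  assumes z: "poly q z = 0" and qnz: "q \<noteq> 0"
  shows "norm z \<le> max 1 ((\<Sum>m<degree q. norm (coeff q m)) / norm (lead_coeff q))"
proof (cases "norm z \<le> 1")
  case True then show ?thesis by simp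
next
  case False
  then have z1: "norm z > 1" by simp
  define n where "n = degree q"
  have lnz: "lead_coeff q \<noteq> 0" using qnz by simp
  have n0: "n > 0"
  proof (rule ccontr)
    assume "\<not> n > 0"
    then have "degree q = 0" by (simp add: n_def)
    then obtain c where "q = [:c:]" by (metis degree_eq_zeroE)
    then show False using z qnz by simp
  qed
  have "poly q z = (\<Sum>m\<le>n. coeff q m * z^m)" by (simp add: poly_altdef n_def)
  also have "\<dots> = (\<Sum>m<n. coeff q m * z^m) + lead_coeff q * z^n"
    by (simp add: lessThan_Suc_atMost[symmetric] n_def)
  finally have "lead_coeff q * z^n = - (\<Sum>m<n. coeff q m * z^m)" using z by (simp add: add_eq_0_iff)
  then have "norm (lead_coeff q) * norm z ^ n = norm (\<Sum>m<n. coeff q m * z^m)"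
    by (metis norm_minus_cancel norm_mult norm_power)
  also have "\<dots> \<le> (\<Sum>m<n. norm (coeff q m) * norm z ^ m)"
    by (rule order.trans[OF norm_sum]) (simp add: norm_mult norm_power)
  also have "\<dots> \<le> (\<Sum>m<n. norm (coeff q m) * norm z ^ (n - 1))"
    by (rule sum_mono, rule mult_left_mono, rule power_increasing) (use z1 in auto)
  also have "\<dots> = (\<Sum>m<n. norm (coeff q m)) * norm z ^ (n - 1)"
    by (simp add: sum_distrib_right)
  finally have ineq: "norm (lead_coeff q) * norm z * norm z ^ (n - 1) \<le> (\<Sum>m<n. norm (coeff q m)) * norm z ^ (n - 1)"
    using n0 by (metis (no_types, lifting) Suc_diff_1 mult.assoc power_Suc)
  have "norm z ^ (n - 1) > 0" using z1 by (intro zero_less_power) linarith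
  then have "norm (lead_coeff q) * norm z \<le> (\<Sum>m<n. norm (coeff q m))"
    using ineq by (simp add: mult_le_cancel_right)
  then have "norm z \<le> (\<Sum>m<n. norm (coeff q m)) / norm (lead_coeff q)"
    using lnz by (simp add: field_simps)
  then show ?thesis by (simp add: n_def)
qed

lemma Phi_nz:
  assumes "standard Phi" shows "Phi \<noteq> 0"
  using assms unfolding standard_def by (auto simp: bieval_def)

lemma Phi_at_nz:
  assumes st: "standard Phi" shows "Phi_at Phi u \<noteq> 0"
proof
  assume z: "Phi_at Phi u = 0"
  have "\<forall>m. [:-u,1:] dvd coeff Phi m"
  proof
    fix m
    have "poly (coeff Phi m) u = 0" using z by (metis coeff_0 coeff_Phi_at)
    then show "[:-u,1:] dvd coeff Phi m" by (simp add: poly_eq_0_iff_dvd)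
  qed
  then have "[:[:-u,1:]:] dvd Phi" by (simp add: const_poly_dvd_iff)
  moreover have "degree [:-u,1:] > 0" by simp
  ultimately show False using st unfolding standard_def by blast
qed

lemma nbr_finite:
  assumes "standard Phi" shows "finite {v. G_adj Phi u v}"
  unfolding G_adj_def bieval_def using poly_roots_finite[OF Phi_at_nz[OF assms]] .

lemma bad_finite:
  assumes st: "standard Phi"
  shows "finite {u. G_adj Phi u u \<or> (\<exists>v. [:-v,1:]^2 dvd Phi_at Phi u) \<or> defective Phi u}"
proof -
  have nz: "Phi \<noteq> 0" using Phi_nz[OF st] .
  have sf: "squarefree Phi" using st by (simp add: standard_def)
  define D where "D = (\<Sum>m\<le>degree Phi. coeff Phi m * [:0,1:]^m)"
  have pD: "poly D u = bieval Phi u u" for u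
    by (simp add: D_def bieval_sum poly_sum poly_power)
  have "D \<noteq> 0" using st pD unfolding standard_def by auto
  then have f1: "finite {u. G_adj Phi u u}" using poly_roots_finite[of D] by (simp add: G_adj_def pD)
  obtain r where r: "r \<noteq> 0" "\<forall>u v. [:-v,1:]^2 dvd Phi_at Phi u \<longrightarrow> poly r u = 0"
    using double_root_poly[OF sf nz] by blast
  have f2: "finite {u. \<exists>v. [:-v,1:]^2 dvd Phi_at Phi u}"
    by (rule rev_finite_subset[OF poly_roots_finite[OF r(1)]]) (use r(2) in auto)
  have f3: "finite {u. defective Phi u}"
    using poly_roots_finite[of "coeff Phi (degree Phi)"] nz
    by (simp add: defective_def partial_degree_def)
  have "{u. G_adj Phi u u \<or> (\<exists>v. [:-v,1:]^2 dvd Phi_at Phi u) \<or> defective Phi u}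
    = {u. G_adj Phi u u} \<union> {u. \<exists>v. [:-v,1:]^2 dvd Phi_at Phi u} \<union> {u. defective Phi u}" by auto
  then show ?thesis using f1 f2 f3 by simp
qed



definition good :: "bipoly \<Rightarrow> ('n::finite \<Rightarrow> 'n \<Rightarrow> bool) \<Rightarrow> complex^'n \<Rightarrow> bool" where
  "good Phi E p \<longleftrightarrow> (\<forall>i j. E i j \<longleftrightarrow> G_adj Phi (p$i) (p$j)) \<and> inj (\<lambda>i. p$i)
     \<and> (\<forall>i. poly (coeff Phi (degree Phi)) (p$i) \<noteq> 0)
     \<and> (\<forall>i y. bieval Phi (p$i) y = poly (coeff Phi (degree Phi)) (p$i) * (\<Prod>j\<in>{j. E i j}. (y - p$j)))"

lemma extend:
  assumes g: "\<forall>k. good Phi E (q k)" and xc: "(\<lambda>k. q k $ i) \<longlonglongrightarrow> c"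
    and cnd: "poly (coeff Phi (degree Phi)) c \<noteq> 0" and ij: "E i j"
  shows "\<exists>r c'. strict_mono r \<and> (\<lambda>k. q (r k) $ j) \<longlonglongrightarrow> c' \<and> G_adj Phi c c'"
proof -
  define x where "x = (\<lambda>k. q k $ i)"
  define y where "y = (\<lambda>k. q k $ j)"
  define a where "a = coeff Phi (degree Phi)"
  define B where "B z = (\<Sum>m<degree Phi. norm (poly (coeff Phi m) z)) / norm (poly a z)" for z
  have adj: "G_adj Phi (x k) (y k)" for k using g ij unfolding good_def x_def y_def by blast
  have nd: "poly a (x k) \<noteq> 0" for k using g unfolding good_def x_def a_def by blast
  have yb: "norm (y k) \<le> max 1 (B (x k))" for k
  proof -
    have dg: "degree (Phi_at Phi (x k)) = degree Phi" using nd[of k] degree_Phi_at a_def by blast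
    have lc: "lead_coeff (Phi_at Phi (x k)) = poly a (x k)" using dg by (simp add: coeff_Phi_at a_def)
    have nz: "Phi_at Phi (x k) \<noteq> 0" using lc nd[of k] by auto
    have "poly (Phi_at Phi (x k)) (y k) = 0" using adj[of k] by (simp add: G_adj_def bieval_def)
    from root_bound[OF this nz] show ?thesis
      by (simp add: dg lc B_def coeff_Phi_at a_def)
  qed
  have xt: "x \<longlonglongrightarrow> c" using xc by (simp add: x_def)
  have pt: "(\<lambda>k. poly p (x k)) \<longlonglongrightarrow> poly p c" for p
    by (rule isCont_tendsto_compose[OF _ xt]) simp
  have "(\<lambda>k. B (x k)) \<longlonglongrightarrow> B c"
    unfolding B_def using cnd unfolding a_def[symmetric]
    by (intro tendsto_intros pt) auto
  then have "Bseq (\<lambda>k. B (x k))" by (rule convergent_imp_Bseq[OF convergentI])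
  then obtain K where K: "\<And>k. norm (B (x k)) \<le> K" by (auto simp: Bseq_def)
  have "\<forall>k. y k \<in> cball 0 (max 1 K)"
  proof
    fix k
    have "B (x k) \<le> K" using K[of k] by simp
    then show "y k \<in> cball 0 (max 1 K)" using yb[of k] by (simp add: dist_norm)
  qed
  then obtain l r where r: "strict_mono r" "(y \<circ> r) \<longlonglongrightarrow> l"
    using compact_imp_seq_compact[OF compact_cball] unfolding seq_compact_def by blast
  have "(\<lambda>k. bieval Phi (x (r k)) (y (r k))) \<longlonglongrightarrow> bieval Phi c l"
    by (rule bieval_tendsto) (use LIMSEQ_subseq_LIMSEQ[OF xt r(1)] r(2) in \<open>simp_all add: o_def\<close>)
  moreover have "(\<lambda>k. bieval Phi (x (r k)) (y (r k))) = (\<lambda>k. 0)"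
    using adj by (simp add: G_adj_def)
  ultimately have "bieval Phi c l = 0" using LIMSEQ_unique tendsto_const by metis
  then show ?thesis using r by (intro exI[of _ r] exI[of _ l]) (simp_all add: G_adj_def y_def o_def)
qed

lemma edge_out:
  assumes "E\<^sup>*\<^sup>* a b" "a \<in> T" "b \<notin> T"
  shows "\<exists>i j. i \<in> T \<and> j \<notin> T \<and> E i j"
  using assms by (induct rule: rtranclp_induct) auto

lemma converge_all:
  fixes E :: "'n::finite \<Rightarrow> 'n \<Rightarrow> bool"
  assumes conn: "connected_graph E" and g: "\<forall>k. good Phi E (p k)"
    and pv: "(\<lambda>k. p k $ i0) \<longlonglongrightarrow> v" and vC: "v \<in> C"
    and Cnd: "\<forall>x\<in>C. poly (coeff Phi (degree Phi)) x \<noteq> 0"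
    and Ccl: "\<forall>x\<in>C. \<forall>y. G_adj Phi x y \<longrightarrow> y \<in> C"
  shows "\<exists>q c. (\<forall>k. good Phi E (q k)) \<and> (\<forall>i. (\<lambda>k. q k $ i) \<longlonglongrightarrow> c i \<and> c i \<in> C)"
proof -
  have main: "n \<le> CARD('n) \<Longrightarrow> \<exists>T q c. i0 \<in> T \<and> n \<le> card T \<and> (\<forall>k. good Phi E (q k))
      \<and> (\<forall>i\<in>T. (\<lambda>k. q k $ i) \<longlonglongrightarrow> c i \<and> c i \<in> C)" for n
  proof (induct n)
    case 0
    show ?case using g pv vC by (intro exI[of _ "{i0}"] exI[of _ p] exI[of _ "\<lambda>_. v"]) auto
  next
    case (Suc n)
    then obtain T q c where T: "i0 \<in> T" "n \<le> card T" "\<forall>k. good Phi E (q k)"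
      "\<forall>i\<in>T. (\<lambda>k. q k $ i) \<longlonglongrightarrow> c i \<and> c i \<in> C" by auto
    show ?case
    proof (cases "Suc n \<le> card T")
      case True then show ?thesis using T by blast
    next
      case False
      then have cT: "card T = n" using T(2) by simp
      then have "T \<noteq> UNIV" using Suc(2) by auto
      then obtain j0 where "j0 \<notin> T" by auto
      moreover have "E\<^sup>*\<^sup>* i0 j0" using conn by (simp add: connected_graph_def)
      ultimately obtain i j where ij: "i \<in> T" "j \<notin> T" "E i j" using edge_out T(1) by metis
      have ci: "(\<lambda>k. q k $ i) \<longlonglongrightarrow> c i" "c i \<in> C" using T(4) ij(1) by auto
      obtain r c' where r: "strict_mono r" "(\<lambda>k. q (r k) $ j) \<longlonglongrightarrow> c'" "G_adj Phi (c i) c'"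
        using extend[OF T(3) ci(1) _ ij(3)] ci(2) Cnd by blast
      have c'C: "c' \<in> C" using Ccl ci(2) r(3) by blast
      show ?thesis
      proof (intro exI[of _ "insert j T"] exI[of _ "\<lambda>k. q (r k)"] exI[of _ "c(j := c')"] conjI)
        show "i0 \<in> insert j T" using T(1) by simp
        show "Suc n \<le> card (insert j T)" using cT ij(2) by simp
        show "\<forall>k. good Phi E (q (r k))" using T(3) by simp
        show "\<forall>i'\<in>insert j T. (\<lambda>k. q (r k) $ i') \<longlonglongrightarrow> (c(j := c')) i' \<and> (c(j := c')) i' \<in> C"
        proof
        fix i' assume "i' \<in> insert j T"
        then show "(\<lambda>k. q (r k) $ i') \<longlonglongrightarrow> (c(j := c')) i' \<and> (c(j := c')) i' \<in> C"
        proof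
          assume "i' = j" then show ?thesis using r(2) c'C by simp
        next
          assume iT: "i' \<in> T"
          then have "i' \<noteq> j" using ij(2) by auto
          then show ?thesis using T(4) iT LIMSEQ_subseq_LIMSEQ[OF _ r(1), of "\<lambda>k. q k $ i'"]
            by (simp add: o_def)
        qed
        qed
      qed
    qed
  qed
  from main[OF order_refl] obtain T q c where T: "CARD('n) \<le> card T" "\<forall>k. good Phi E (q k)"
      "\<forall>i\<in>T. (\<lambda>k. q k $ i) \<longlonglongrightarrow> c i \<and> c i \<in> C" by blast
  have "T = UNIV" using card_seteq[of UNIV T] T(1) by simp
  then show ?thesis using T by blast
qed



lemma polyfun_tendsto:
  fixes q :: "nat \<Rightarrow> complex^'n"
  assumes "P \<in> polyfun" and "\<forall>i. (\<lambda>k. q k $ i) \<longlonglongrightarrow> u $ i"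
  shows "(\<lambda>k. P (q k)) \<longlonglongrightarrow> P u"
  using assms by (induct rule: polyfun.induct) (auto intro: tendsto_intros)

lemma good_from_bij:
  fixes E :: "'n::finite \<Rightarrow> 'n \<Rightarrow> bool"
  assumes st: "standard Phi" and reg: "regular_graph E (degree Phi)"
    and bij: "bij_betw f UNIV Cw" and adj: "\<forall>i j. E i j \<longleftrightarrow> G_adj Phi (f i) (f j)"
    and nd: "\<forall>i. poly (coeff Phi (degree Phi)) (f i) \<noteq> 0"
  shows "good Phi E (\<chi> i. f i)"
proof -
  have inj: "inj f" using bij by (simp add: bij_betw_def)
  have prodid: "bieval Phi (f i) y = poly (coeff Phi (degree Phi)) (f i) * (\<Prod>j\<in>{j. E i j}. (y - f j))" for i y
  proof -
    define q where "q = Phi_at Phi (f i)"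
    define R where "R = f ` {j. E i j}"
    have dq: "degree q = degree Phi" unfolding q_def using nd degree_Phi_at by blast
    have lc: "lead_coeff q = poly (coeff Phi (degree Phi)) (f i)" using dq by (simp add: q_def coeff_Phi_at)
    have cR: "card R = degree Phi" unfolding R_def using reg inj
      by (simp add: card_image inj_on_subset regular_graph_def)
    have "poly q y = lead_coeff q * (\<Prod>r\<in>R. (y - r))"
    proof (rule roots_prod_eq)
      show "finite R" by (simp add: R_def)
      show "\<forall>r\<in>R. poly q r = 0" using adj by (auto simp: R_def q_def G_adj_def bieval_def)
      show "q \<noteq> 0" unfolding q_def by (rule Phi_at_nz[OF st])
      show "degree q = card R" using dq cR by simp
    qed
    also have "(\<Prod>r\<in>R. (y - r)) = (\<Prod>j\<in>{j. E i j}. (y - f j))"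
      unfolding R_def by (rule prod.reindex_cong[OF inj_on_subset[OF inj subset_UNIV]]) auto
    finally show ?thesis using lc by (simp add: q_def bieval_def)
  qed
  show ?thesis unfolding good_def
  proof (intro conjI)
    show "\<forall>i j. E i j = G_adj Phi ((\<chi> i. f i) $ i) ((\<chi> i. f i) $ j)" using adj by simp
    show "inj (\<lambda>i. (\<chi> i. f i) $ i)" using inj by simp
    show "\<forall>i. poly (coeff Phi (degree Phi)) ((\<chi> i. f i) $ i) \<noteq> 0" using nd by simp
    show "\<forall>i y. bieval Phi ((\<chi> i. f i) $ i) y = poly (coeff Phi (degree Phi)) ((\<chi> i. f i) $ i) *
       (\<Prod>j\<in>{j. E i j}. y - (\<chi> i. f i) $ j)" using prodid by (simp del: vec_lambda_beta add: vec_lambda_beta[of f])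
  qed
qed



theorem mainTheorem8:
  fixes Phi :: bipoly and d :: nat and E :: "'n::finite \<Rightarrow> 'n \<Rightarrow> bool" and C :: "complex set"
  assumes "standard Phi" and "symmetric_bipoly Phi" and "partial_degree Phi = d"
    and "simple_graph E" and "connected_graph E" and "regular_graph E d"
    and "strongly_poly E Phi"
    and "singular_component Phi C" and "\<forall>u\<in>C. \<not> defective Phi u"
  shows "\<exists>u \<in> U_set E Phi. improper u \<and> C = induced_vertices u
           \<and> (\<forall>i j. E i j \<longrightarrow> G_adj Phi (u $ i) (u $ j))
           \<and> (\<forall>v\<in>C. \<forall>w\<in>C. G_adj Phi v w \<longrightarrow> (\<exists>i j. E i j \<and> u $ i = v \<and> u $ j = w))"
proof -
  note st = assms(1)
  define a where "a = coeff Phi (degree Phi)"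
  define G where "G = G_adj Phi"
  have dd: "d = degree Phi" using assms(3) by (simp add: partial_degree_def)
  have sym: "G x y \<Longrightarrow> G y x" for x y
    using assms(2) by (simp add: G_def G_adj_def symmetric_bipoly_def)
  define bad where "bad x \<longleftrightarrow> G_adj Phi x x \<or> (\<exists>v. [:-v,1:]^2 dvd Phi_at Phi x) \<or> defective Phi x" for x
  have badfin: "finite {x. bad x}" unfolding bad_def by (rule bad_finite[OF st])
  define S where "S = (\<Union>b\<in>{x. bad x}. {w. G\<^sup>*\<^sup>* b w})"
  have Scount: "countable S" unfolding S_def
    by (intro countable_UN countable_finite[OF badfin] reach_countable) (simp add: G_def nbr_finite[OF st])
  obtain b0 where C: "C = {w. G\<^sup>*\<^sup>* b0 w}"
    using assms(8) by (auto simp: singular_component_def component_def G_def)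
  have b0C: "b0 \<in> C" using C by simp
  have Cnd: "\<forall>x\<in>C. poly a x \<noteq> 0" using assms(9) by (simp add: defective_def a_def partial_degree_def)
  have Ccl: "\<forall>x\<in>C. \<forall>y. G x y \<longrightarrow> y \<in> C" using C by auto
  have Cconn: "x \<in> C \<Longrightarrow> y \<in> C \<Longrightarrow> G\<^sup>*\<^sup>* x y" for x y
    using C rtranclp_sym[of G, OF sym] by (metis mem_Collect_eq rtranclp_trans)
  have reg: "regular_graph E (degree Phi)" using assms(6) dd by simp
  have good_ex: "\<exists>p i. good Phi E p \<and> p $ i = w" if wS: "w \<notin> S" for w
  proof -
    define Cw where "Cw = {x. G\<^sup>*\<^sup>* w x}"
    have nb: "\<not> bad x" if "x \<in> Cw" for x
    proof
      assume "bad x"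
      moreover have "G\<^sup>*\<^sup>* x w" using that rtranclp_sym[of G, OF sym] by (simp add: Cw_def)
      ultimately show False using wS by (auto simp: S_def)
    qed
    have comp: "component Phi Cw" by (auto simp: component_def Cw_def G_def)
    have "\<not> singular_component Phi Cw"
      using nb by (auto simp: singular_component_def bad_def)
    then obtain f where f: "bij_betw f UNIV Cw" "\<forall>i j. E i j \<longleftrightarrow> G_adj Phi (f i) (f j)"
      using assms(7) comp by (auto simp: strongly_poly_def)
    have fC: "f i \<in> Cw" for i using f(1) by (auto simp: bij_betw_def)
    have nd: "\<forall>i. poly (coeff Phi (degree Phi)) (f i) \<noteq> 0"
      using nb fC by (auto simp: bad_def defective_def partial_degree_def)
    have g: "good Phi E (\<chi> i. f i)" by (rule good_from_bij[OF st reg f nd])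
    have "w \<in> Cw" by (simp add: Cw_def)
    then obtain i where "f i = w" using f(1) by (metis bij_betw_def imageE)
    then show ?thesis using g by (intro exI[of _ "\<chi> i. f i"] exI[of _ i]) simp
  qed
  \<comment> \<open>pigeonhole\<close>
  have "\<exists>i0. \<forall>e>0. \<exists>p. good Phi E p \<and> dist (p $ i0) b0 < e"
  proof (rule ccontr)
    assume "\<not> ?thesis"
    then have "\<forall>i. \<exists>e>0. \<forall>p. good Phi E p \<longrightarrow> dist (p $ i) b0 \<ge> e" by (auto simp: not_less)
    then obtain ep where ep: "\<And>i. ep i > 0" "\<And>i p. good Phi E p \<Longrightarrow> dist (p $ i) b0 \<ge> ep i" by metis
    define e where "e = Min (range ep)"
    have e0: "e > 0" unfolding e_def using ep(1) by (simp)
    have ei: "e \<le> ep i" for i unfolding e_def by simp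
    from ball_minus_countable_nonempty[OF Scount e0, of b0] obtain w where "w \<in> ball b0 e - S" by blast
    then have w: "w \<in> ball b0 e" "w \<notin> S" by auto
    obtain p i where p: "good Phi E p" "p $ i = w" using good_ex[OF w(2)] by blast
    have "dist (p $ i) b0 < e" using w(1) p(2) by (simp add: dist_commute)
    with ep(2)[OF p(1), of i] ei[of i] show False by simp
  qed
  then obtain i0 where i0: "\<forall>e>0. \<exists>p. good Phi E p \<and> dist (p $ i0) b0 < e" by blast
  have "\<forall>k. \<exists>p. good Phi E p \<and> dist (p $ i0) b0 < inverse (real (Suc k))"
  proof
    fix k
    have "inverse (real (Suc k)) > 0" by simp
    then show "\<exists>p. good Phi E p \<and> dist (p $ i0) b0 < inverse (real (Suc k))" using i0 by blast
  qed
  then have "\<exists>p. \<forall>k. good Phi E (p k) \<and> dist (p k $ i0) b0 < inverse (real (Suc k))"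
    by (rule choice)
  then obtain p where p0: "\<forall>k. good Phi E (p k) \<and> dist (p k $ i0) b0 < inverse (real (Suc k))"
    by blast
  have p: "\<And>k. good Phi E (p k)" "\<And>k. dist (p k $ i0) b0 < inverse (real (Suc k))"
    using p0 by auto
  have pv: "(\<lambda>k. p k $ i0) \<longlonglongrightarrow> b0"
  proof -
    have e1: "\<forall>\<^sub>F k in sequentially. 0 \<le> dist (p k $ i0) b0" by simp
    have e2: "\<forall>\<^sub>F k in sequentially. dist (p k $ i0) b0 \<le> inverse (real (Suc k))"
      by (intro always_eventually allI less_imp_le[OF p(2)])
    have "(\<lambda>k. dist (p k $ i0) b0) \<longlonglongrightarrow> 0"
      by (rule real_tendsto_sandwich[OF e1 e2 tendsto_const LIMSEQ_inverse_real_of_nat])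
    then show ?thesis by (subst tendsto_dist_iff)
  qed
  obtain q c where qc: "\<forall>k. good Phi E (q k)" "\<forall>i. (\<lambda>k. q k $ i) \<longlonglongrightarrow> c i \<and> c i \<in> C"
  proof -
    have "\<forall>k. good Phi E (p k)" using p(1) by blast
    moreover have "\<forall>x\<in>C. poly (coeff Phi (degree Phi)) x \<noteq> 0" using Cnd by (simp add: a_def)
    moreover have "\<forall>x\<in>C. \<forall>y. G_adj Phi x y \<longrightarrow> y \<in> C" using Ccl by (simp add: G_def)
    ultimately show ?thesis using converge_all[OF assms(5), of Phi p i0 b0 C] pv b0C that by blast
  qed
  define u where "u = (\<chi> i. c i)"
  have ut: "\<forall>i. (\<lambda>k. q k $ i) \<longlonglongrightarrow> u $ i" using qc(2) by (simp add: u_def)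
  have uC: "u $ i \<in> C" for i using qc(2) by (simp add: u_def)
  have qg: "good Phi E (q k)" for k using qc(1) by blast
  have zero_lim: "X = 0" if "(\<lambda>k. 0) \<longlonglongrightarrow> X" for X :: complex
    using LIMSEQ_unique[OF that tendsto_const] by simp
  have uE: "G_adj Phi (u $ i) (u $ j)" if "E i j" for i j
  proof -
    have "(\<lambda>k. bieval Phi (q k $ i) (q k $ j)) \<longlonglongrightarrow> bieval Phi (u $ i) (u $ j)"
      using ut by (intro bieval_tendsto) auto
    moreover have "(\<lambda>k. bieval Phi (q k $ i) (q k $ j)) = (\<lambda>k. 0)"
    proof
      fix k show "bieval Phi (q k $ i) (q k $ j) = 0"
        using qg[of k] that unfolding good_def G_adj_def by blast
    qed
    ultimately show ?thesis by (simp add: G_adj_def zero_lim)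
  qed
  have uP: "bieval Phi (u $ i) y = poly a (u $ i) * (\<Prod>j\<in>{j. E i j}. (y - u $ j))" for i y
  proof -
    have "(\<lambda>k. bieval Phi (q k $ i) y) \<longlonglongrightarrow> bieval Phi (u $ i) y"
      using ut by (intro bieval_tendsto) auto
    moreover have "(\<lambda>k. bieval Phi (q k $ i) y) = (\<lambda>k. poly a (q k $ i) * (\<Prod>j\<in>{j. E i j}. (y - q k $ j)))"
      using qg by (simp add: good_def a_def)
    moreover have "(\<lambda>k. poly a (q k $ i) * (\<Prod>j\<in>{j. E i j}. (y - q k $ j))) \<longlonglongrightarrow> poly a (u $ i) * (\<Prod>j\<in>{j. E i j}. (y - u $ j))"
    proof (rule tendsto_mult)
      show "(\<lambda>k. poly a (q k $ i)) \<longlonglongrightarrow> poly a (u $ i)"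
        by (rule isCont_tendsto_compose[OF _ ut[rule_format, of i]]) simp
      show "(\<lambda>k. \<Prod>j\<in>{j. E i j}. (y - q k $ j)) \<longlonglongrightarrow> (\<Prod>j\<in>{j. E i j}. (y - u $ j))"
        by (rule tendsto_prod, rule tendsto_diff[OF tendsto_const ut[rule_format]])
    qed
    ultimately show ?thesis using LIMSEQ_unique by metis
  qed
  have uroot: "\<exists>j. E i j \<and> y = u $ j" if "G_adj Phi (u $ i) y" for i y
  proof -
    have "poly a (u $ i) * (\<Prod>j\<in>{j. E i j}. (y - u $ j)) = 0"
      using that uP by (simp add: G_adj_def)
    moreover have "poly a (u $ i) \<noteq> 0" using Cnd uC by blast
    ultimately have "(\<Prod>j\<in>{j. E i j}. (y - u $ j)) = 0" by simp
    then show ?thesis by (simp add: prod_zero_iff)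
  qed
  have Csub: "C \<subseteq> range (\<lambda>i. u $ i)"
  proof
    fix w assume wC: "w \<in> C"
    have "G\<^sup>*\<^sup>* (u $ i0) w" using Cconn[OF uC wC] .
    then show "w \<in> range (\<lambda>i. u $ i)"
    proof (induct rule: rtranclp_induct)
      case base then show ?case by simp
    next
      case (step y z)
      then obtain i where yi: "y = u $ i" by auto
      have "G_adj Phi (u $ i) z" using step(2) yi by (simp add: G_def)
      then obtain j where "z = u $ j" using uroot by blast
      then show ?case by simp
    qed
  qed
  have Ceq: "C = induced_vertices u"
  proof -
    have "range (\<lambda>i. u $ i) \<subseteq> C" using uC by blast
    then show ?thesis using Csub unfolding induced_vertices_def by blast
  qed
  have uU: "u \<in> U_set E Phi"
    unfolding U_set_def zariski_closure_def
  proof (intro CollectI ballI impI)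
    fix P :: "complex^'n \<Rightarrow> complex" assume P: "P \<in> polyfun" and van: "\<forall>s\<in>W_set E Phi - Z_set E Phi. P s = 0"
    have "q k \<in> W_set E Phi - Z_set E Phi" for k
    proof -
      have g1: "\<forall>i j. E i j \<longrightarrow> bieval Phi (q k $ i) (q k $ j) = 0" and g2: "inj (\<lambda>i. q k $ i)"
        using qg[of k] unfolding good_def G_adj_def by blast+
      have "q k \<in> W_set E Phi" using g1 unfolding W_set_def by blast
      moreover have "\<not> improper (q k)" using g2 unfolding improper_def inj_def by blast
      ultimately show ?thesis unfolding Z_set_def by blast
    qed
    then have "(\<lambda>k. P (q k)) = (\<lambda>k. 0)" using van by auto
    moreover have "(\<lambda>k. P (q k)) \<longlonglongrightarrow> P u" by (rule polyfun_tendsto[OF P ut])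
    ultimately show "P u = 0" by (simp add: zero_lim)
  qed
  have irr: "\<not> E i i" for i using assms(4) by (simp add: simple_graph_def)
  have uimp: "improper u"
  proof (rule ccontr)
    assume ni: "\<not> improper u"
    then have dist: "i \<noteq> j \<Longrightarrow> u $ i \<noteq> u $ j" for i j by (auto simp: improper_def)
    have "\<not> singular_component Phi C"
    proof -
      have noloop: "\<not> G_adj Phi x x" if xC: "x \<in> C" for x
      proof
        assume lx: "G_adj Phi x x"
        obtain i where xi: "x = u $ i" using Csub xC by auto
        then obtain j where "E i j" "x = u $ j" using uroot lx by blast
        then show False using irr dist xi by metis
      qed
      have nodouble: "\<not> [:-w,1:]^2 dvd Phi_at Phi x" if xC: "x \<in> C" for x w
      proof
        assume dw: "[:-w,1:]^2 dvd Phi_at Phi x"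
        obtain i where xi: "x = u $ i" using Csub xC by auto
        define N where "N = {j. E i j}"
        define c0 where "c0 = poly a x"
        have "poly (Phi_at Phi x) w = 0" using dw by (auto elim!: dvdE)
        then obtain j0 where j0: "E i j0" "w = u $ j0" using uroot xi by (auto simp: G_adj_def bieval_def)
        have Pe: "Phi_at Phi x = smult c0 (\<Prod>j\<in>N. [:-(u $ j),1:])"
        proof (rule poly_eq_poly_eq_iff[THEN iffD1], rule ext)
          fix y
          show "poly (Phi_at Phi x) y = poly (smult c0 (\<Prod>j\<in>N. [:-(u $ j),1:])) y"
            using uP[of i y] by (simp add: bieval_def xi c0_def N_def poly_prod)
        qed
        have fN: "finite N" by simp
        have j0N: "j0 \<in> N" using j0 by (simp add: N_def)
        have pr: "(\<Prod>j\<in>N. [:-(u $ j),1:]) = [:-w,1:] * (\<Prod>j\<in>N - {j0}. [:-(u $ j),1:])"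
          unfolding j0(2) by (rule prod.remove[OF fN j0N])
        have eq: "Phi_at Phi x = [:-w,1:] * smult c0 (\<Prod>j\<in>N - {j0}. [:-(u $ j),1:])"
          unfolding Pe pr by (simp only: mult_smult_right)
        have "[:-w,1:] * [:-w,1:] dvd [:-w,1:] * smult c0 (\<Prod>j\<in>N - {j0}. [:-(u $ j),1:])"
          using dw unfolding eq power2_eq_square .
        then have "[:-w,1:] dvd smult c0 (\<Prod>j\<in>N - {j0}. [:-(u $ j),1:])"
          by (rule iffD1[OF dvd_times_left_cancel_iff, rotated]) simp
        then have "c0 * (\<Prod>j\<in>N - {j0}. (w - u $ j)) = 0"
          by (simp add: poly_eq_0_iff_dvd[symmetric] poly_prod)
        moreover have "c0 \<noteq> 0" using Cnd xC by (simp add: c0_def)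
        ultimately obtain j where "j \<in> N - {j0}" "w = u $ j" by (auto simp: prod_zero_iff)
        then show False using dist j0(2) by auto
      qed
      show ?thesis using noloop nodouble assms(9) by (auto simp: singular_component_def)
    qed
    then show False using assms(8) by simp
  qed
  show ?thesis
  proof (intro bexI[OF _ uU] conjI)
    show "improper u" by (rule uimp)
    show "C = induced_vertices u" by (rule Ceq)
    show "\<forall>i j. E i j \<longrightarrow> G_adj Phi (u $ i) (u $ j)" using uE by blast
    show "\<forall>v\<in>C. \<forall>w\<in>C. G_adj Phi v w \<longrightarrow> (\<exists>i j. E i j \<and> u $ i = v \<and> u $ j = w)"
    proof (intro ballI impI)
      fix v w assume "v \<in> C" "w \<in> C" "G_adj Phi v w"
      then obtain i where "u $ i = v" using Csub by auto
      with \<open>G_adj Phi v w\<close> obtain j where "E i j" "w = u $ j" using uroot by blast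
      then show "\<exists>i j. E i j \<and> u $ i = v \<and> u $ j = w" using \<open>u $ i = v\<close> by blast
    qed
  qed
qed

end
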